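(* Let $n\ge 3$ and let $\mathcal{H}$ be the associating hypergraph on $M(D_n,2)$. Then the matching number is $\upsilon(\mathcal{H})=n+\lfloor n/3\rfloor$.
   Context: $D_n=\langle x,y\mid x^n=y^2=1,\ xy=yx^{-1}\rangle$. $M(D_n,2)=\{(g,\alpha): g\in D_n,\ \alpha\in\mathbb{Z}_2\}$ with $(g_1,\alpha_1)\circ(g_2,\alpha_2)=(g_1^{1-\alpha_2} g_2^{(-1)^{\alpha_1}} g_1^{\alpha_2},\ \alpha_1+\alpha_2)$. The associating hypergraph $\mathcal{H}$ has vertex set $M(D_n,2)$ ($4n$ vertices), and a 3-element set $\{a,b,c\}$ of distinct elements is a hyperedge when $(a\circ b)\circ c=a\circ(b\circ c)$. A matching is a set of pairwise vertex-disjoint hyperedges; $\upsilon(\mathcal{H})$ is the maximum size of a matching. *)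

theory Defs
  imports Main
begin

text \<open>Dihedral group D_n, concretely: the pair (k, s) with k < n, s < 2 stands for x^k y^s.
  Since y x = x^(-1) y, we have x^a y^s * x^b y^t = x^(a + (-1)^s b) y^(s+t).\<close>

type_synonym dih = "nat \<times> nat"

definition dih_carrier :: "nat \<Rightarrow> dih set" where
  "dih_carrier n = {(k, s). k < n \<and> s < 2}"

definition dih_one :: dih where
  "dih_one = (0, 0)"

definition dih_mult :: "nat \<Rightarrow> dih \<Rightarrow> dih \<Rightarrow> dih" where
  "dih_mult n g h = (case g of (a, s) \<Rightarrow> case h of (b, t) \<Rightarrow>
     ((if s = 0 then a + b else a + (n - b)) mod n, (s + t) mod 2))"

definition dih_inv :: "nat \<Rightarrow> dih \<Rightarrow> dih" where
  "dih_inv n g = (case g of (a, s) \<Rightarrow> if s = 0 then ((n - a) mod n, 0) else (a, s))"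

text \<open>M(D_n,2) = D_n x Z_2, with (g1,a1) o (g2,a2) = (g1^(1-a2) g2^((-1)^a1) g1^a2, a1+a2).\<close>

definition M_carrier :: "nat \<Rightarrow> (dih \<times> nat) set" where
  "M_carrier n = {(g, \<alpha>). g \<in> dih_carrier n \<and> \<alpha> < 2}"

definition M_op :: "nat \<Rightarrow> dih \<times> nat \<Rightarrow> dih \<times> nat \<Rightarrow> dih \<times> nat" where
  "M_op n p q = (case p of (g1, a1) \<Rightarrow> case q of (g2, a2) \<Rightarrow>
     (dih_mult n (dih_mult n (if a2 = 0 then g1 else dih_one)
                             (if a1 = 0 then g2 else dih_inv n g2))
                 (if a2 = 0 then dih_one else g1),
      (a1 + a2) mod 2))"

definition assoc_hyperedges :: "nat \<Rightarrow> (dih \<times> nat) set set" where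
  "assoc_hyperedges n = {e. \<exists>a b c. a \<in> M_carrier n \<and> b \<in> M_carrier n \<and> c \<in> M_carrier n \<and>
      a \<noteq> b \<and> a \<noteq> c \<and> b \<noteq> c \<and> e = {a, b, c} \<and>
      M_op n (M_op n a b) c = M_op n a (M_op n b c)}"

definition is_matching :: "nat \<Rightarrow> (dih \<times> nat) set set \<Rightarrow> bool" where
  "is_matching n F \<longleftrightarrow> F \<subseteq> assoc_hyperedges n \<and>
      (\<forall>e\<in>F. \<forall>e'\<in>F. e \<noteq> e' \<longrightarrow> e \<inter> e' = {})"

definition matching_number :: "nat \<Rightarrow> nat" where
  "matching_number n = Max (card ` {F. is_matching n F})"

end

theory Submission
  imports Defs
begin

lemma le_mod_aux: "0 < (n::nat) \<Longrightarrow> x mod n \<le> n + a" 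
  by (meson le_add1 less_imp_le_nat mod_less_divisor order_trans)
lemma le_mod_aux2: "0 < (n::nat) \<Longrightarrow> x mod n \<le> a + n" 
  by (meson le_add2 less_imp_le_nat mod_less_divisor order_trans)

lemma aux_addm: "((x::int) + (y + m) - z) mod m = (x+y-z) mod m"
proof -
  have "x+(y+m)-z = (x+y-z)+m" by simp
  then show ?thesis by (metis mod_add_self2)
qed

lemma rot1: assumes "a < n" "b < n" "c < n"
  shows "M_op n (M_op n ((a,0),1) ((b,0),1)) ((c,0),1) = M_op n ((a,0),1) (M_op n ((b,0),1) ((c,0),1))"
  using assms apply (simp add: M_op_def dih_mult_def dih_inv_def dih_one_def mod_simps)
  apply (rule int_int_eq[THEN iffD1])
  apply (simp add: zmod_int of_nat_diff le_mod_aux le_mod_aux2 mod_simps)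
  apply (simp add: algebra_simps aux_addm)
  done

lemma ref1: assumes "a < n" "b < n" "c < n"
  shows "M_op n (M_op n ((a,1),1) ((b,1),1)) ((c,1),1) = M_op n ((a,1),1) (M_op n ((b,1),1) ((c,1),1))"
  using assms apply (simp add: M_op_def dih_mult_def dih_inv_def dih_one_def mod_simps)
  apply (rule int_int_eq[THEN iffD1])
  apply (simp add: zmod_int of_nat_diff le_mod_aux le_mod_aux2 mod_simps)
  apply (simp add: algebra_simps aux_addm)
  done

lemma nat_mod_int_iff: "((x::nat) mod n = y mod n) \<longleftrightarrow> (int x mod int n = int y mod int n)"
  by (metis int_int_eq zmod_int)
lemma grp0: assumes "a < n" "b < n" "c < n" "s < 2" "t < 2" "u < 2"
  shows "M_op n (M_op n ((a,s),0) ((b,t),0)) ((c,u),0) = M_op n ((a,s),0) (M_op n ((b,t),0) ((c,u),0))"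
proof -
  have "s = 0 \<or> s = 1" "t = 0 \<or> t = 1" "u = 0 \<or> u = 1" using assms by auto
  then show ?thesis
    using assms(1-3) 
    apply (elim disjE)
    apply (simp_all add: M_op_def dih_mult_def dih_inv_def dih_one_def mod_simps)
    apply (simp_all only: nat_mod_int_iff)
    apply (simp_all add: zmod_int of_nat_diff le_mod_aux le_mod_aux2 mod_simps)
    apply (simp_all add: mod_eq_dvd_iff algebra_simps)
    done
qed


definition clique :: "nat \<Rightarrow> (dih \<times> nat) set \<Rightarrow> bool" where
  "clique n S \<longleftrightarrow> S \<subseteq> M_carrier n \<and>
     (\<forall>a\<in>S. \<forall>b\<in>S. \<forall>c\<in>S. M_op n (M_op n a b) c = M_op n a (M_op n b c))"

lemma clique_subset: "clique n S \<Longrightarrow> T \<subseteq> S \<Longrightarrow> clique n T"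
  unfolding clique_def by blast

lemma hyperedge_card: "e \<in> assoc_hyperedges n \<Longrightarrow> card e = 3"
proof -
  assume "e \<in> assoc_hyperedges n"
  then obtain a b c where "a \<noteq> b" "a \<noteq> c" "b \<noteq> c" "e = {a,b,c}"
    unfolding assoc_hyperedges_def by blast
  then show ?thesis by simp
qed

lemma hyperedge_ne: "e \<in> assoc_hyperedges n \<Longrightarrow> e \<noteq> {}"
  unfolding assoc_hyperedges_def by auto

lemma hyperedge_sub: "e \<in> assoc_hyperedges n \<Longrightarrow> e \<subseteq> M_carrier n"
  unfolding assoc_hyperedges_def by auto

lemma M_carrier_eq: "M_carrier n = ({..<n} \<times> {..<2}) \<times> {..<2}"
  unfolding M_carrier_def dih_carrier_def by auto

lemma finite_M: "finite (M_carrier n)"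
  by (simp add: M_carrier_eq)

lemma card_M: "card (M_carrier n) = 4 * n"
  by (simp add: M_carrier_eq card_cartesian_product)

lemma matching_sub: "is_matching n F \<Longrightarrow> F \<subseteq> assoc_hyperedges n"
  unfolding is_matching_def by (rule conjunct1)

lemma matching_disj: "is_matching n F \<Longrightarrow> e \<in> F \<Longrightarrow> e' \<in> F \<Longrightarrow> e \<noteq> e' \<Longrightarrow> e \<inter> e' = {}"
  unfolding is_matching_def by blast

lemma matching_Pow: "is_matching n F \<Longrightarrow> F \<subseteq> Pow (M_carrier n)"
  using matching_sub hyperedge_sub by blast

lemma matching_finite: "is_matching n F \<Longrightarrow> finite F"
proof -
  assume "is_matching n F"
  then have "F \<subseteq> Pow (M_carrier n)" by (rule matching_Pow)
  moreover have "finite (Pow (M_carrier n))" using finite_M by simp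
  ultimately show "finite F" by (rule finite_subset)
qed

lemma matching_upper: assumes "is_matching n F" shows "3 * card F \<le> 4 * n"
proof -
  have sub: "F \<subseteq> assoc_hyperedges n" using matching_sub[OF assms] .
  have pw: "pairwise disjnt F" unfolding pairwise_def disjnt_def using matching_disj[OF assms] by blast
  have fe: "finite A" if "A \<in> F" for A
  proof -
    have "A \<in> assoc_hyperedges n" using sub that by blast
    then have "A \<subseteq> M_carrier n" by (rule hyperedge_sub)
    then show ?thesis using finite_M finite_subset by blast
  qed
  have "card (\<Union>F) = sum card F"
    by (rule card_Union_disjoint[OF pw fe])
  also have "\<dots> = sum (\<lambda>_. 3) F"
  proof (rule sum.cong)
    fix x assume "x \<in> F"
    then have "x \<in> assoc_hyperedges n" using sub by blast
    then show "card x = 3" by (rule hyperedge_card)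
  qed simp
  also have "\<dots> = 3 * card F" by simp
  finally have eq: "card (\<Union>F) = 3 * card F" .
  have "\<Union>F \<subseteq> M_carrier n" using matching_Pow[OF assms] by blast
  then have "card (\<Union>F) \<le> card (M_carrier n)" by (rule card_mono[OF finite_M])
  then show ?thesis using eq card_M by simp
qed

lemma clique_edge: "clique n S \<Longrightarrow> a \<in> S \<Longrightarrow> b \<in> S \<Longrightarrow> c \<in> S \<Longrightarrow> a \<noteq> b \<Longrightarrow> a \<noteq> c \<Longrightarrow> b \<noteq> c
  \<Longrightarrow> {a,b,c} \<in> assoc_hyperedges n"
proof -
  assume h: "clique n S" "a \<in> S" "b \<in> S" "c \<in> S" "a \<noteq> b" "a \<noteq> c" "b \<noteq> c"
  then have m: "a \<in> M_carrier n" "b \<in> M_carrier n" "c \<in> M_carrier n"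
    unfolding clique_def by auto
  have as: "M_op n (M_op n a b) c = M_op n a (M_op n b c)"
    using h(1-4) unfolding clique_def by blast
  show ?thesis unfolding assoc_hyperedges_def
    apply (rule CollectI)
    apply (rule exI[of _ a], rule exI[of _ b], rule exI[of _ c])
    using m as h(5-7) by simp
qed

lemma matching_insert:
  assumes "is_matching n F" "T \<in> assoc_hyperedges n" "\<forall>e\<in>F. T \<inter> e = {}"
  shows "is_matching n (insert T F)"
  unfolding is_matching_def
proof (intro conjI ballI impI)
  show "insert T F \<subseteq> assoc_hyperedges n" using matching_sub[OF assms(1)] assms(2) by simp
  fix e e' assume "e \<in> insert T F" "e' \<in> insert T F" "e \<noteq> e'"
  then consider "e = T" "e' \<in> F" | "e' = T" "e \<in> F" | "e \<in> F" "e' \<in> F" by blast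
  then show "e \<inter> e' = {}"
  proof cases
    case 1 then show ?thesis using assms(3) by blast
  next
    case 2 then show ?thesis using assms(3) by blast
  next
    case 3 then show ?thesis using matching_disj[OF assms(1)] \<open>e \<noteq> e'\<close> by blast
  qed
qed

lemma clique_matching:
  "finite S \<Longrightarrow> clique n S \<Longrightarrow> \<exists>F. is_matching n F \<and> card F = card S div 3 \<and> (\<forall>e\<in>F. e \<subseteq> S)"
proof (induction "card S" arbitrary: S rule: less_induct)
  case less
  show ?case
  proof (cases "card S < 3")
    case True
    have "is_matching n {}" by (simp add: is_matching_def)
    then show ?thesis using True by (intro exI[of _ "{}"]) simp
  next
    case False
    then have "3 \<le> card S" by simp
    then obtain T where T: "T \<subseteq> S" "card T = 3"
      by (rule obtain_subset_with_card_n)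
    then obtain a b c where abc: "T = {a,b,c}" "a \<noteq> b" "b \<noteq> c" "a \<noteq> c"
      unfolding card_3_iff by blast
    have inS: "a \<in> S" "b \<in> S" "c \<in> S" using T(1) abc(1) by auto
    have Te: "T \<in> assoc_hyperedges n"
      using clique_edge[OF less.prems(2) inS abc(2) abc(4) abc(3)] abc(1) by simp
    have fT: "finite T" using T(1) less.prems(1) finite_subset by blast
    have cS': "card (S - T) = card S - 3" using T fT by (simp add: card_Diff_subset)
    have lt: "card (S - T) < card S" using cS' False by simp
    have fin: "finite (S - T)" using less.prems(1) by simp
    have cl: "clique n (S - T)" using clique_subset[OF less.prems(2), of "S - T"] by blast
    have "\<exists>F. is_matching n F \<and> card F = card (S - T) div 3 \<and> (\<forall>e\<in>F. e \<subseteq> S - T)"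
      by (rule less.hyps[OF lt fin cl])
    then obtain F where F: "is_matching n F" "card F = card (S - T) div 3" "\<forall>e\<in>F. e \<subseteq> S - T"
      by blast
    have TF: "T \<notin> F"
    proof
      assume "T \<in> F"
      then have "T \<subseteq> S - T" using F(3) by blast
      then have "T = {}" by blast
      then show False using hyperedge_ne[OF Te] by simp
    qed
    have fF: "finite F" using F(1) by (rule matching_finite)
    have "\<forall>e\<in>F. T \<inter> e = {}" using F(3) by blast
    then have M: "is_matching n (insert T F)"
      using F(1) Te by (rule matching_insert[rotated 2])
    have C: "card (insert T F) = card S div 3"
      using TF fF F(2) cS' False by simp
    have "\<forall>e\<in>insert T F. e \<subseteq> S" using F(3) T(1) by blast
    then show ?thesis using M C by blast
  qed
qed

lemma matching_union:
  assumes "is_matching n F1" "is_matching n F2" "\<forall>e\<in>F1. e \<subseteq> A" "\<forall>e\<in>F2. e \<subseteq> B" "A \<inter> B = {}"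
  shows "is_matching n (F1 \<union> F2) \<and> card (F1 \<union> F2) = card F1 + card F2 \<and> (\<forall>e\<in>F1 \<union> F2. e \<subseteq> A \<union> B)"
proof -
  have d: "F1 \<inter> F2 = {}"
  proof (rule ccontr)
    assume "F1 \<inter> F2 \<noteq> {}"
    then obtain e where "e \<in> F1" "e \<in> F2" by blast
    then have "e \<subseteq> A \<inter> B" using assms(3,4) by blast
    moreover have "e \<noteq> {}" using \<open>e \<in> F1\<close> matching_sub[OF assms(1)] hyperedge_ne by blast
    ultimately show False using assms(5) by blast
  qed
  have "is_matching n (F1 \<union> F2)"
    unfolding is_matching_def
  proof (intro conjI ballI impI)
    show "F1 \<union> F2 \<subseteq> assoc_hyperedges n" using matching_sub[OF assms(1)] matching_sub[OF assms(2)] by blast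
    fix e e' assume ee: "e \<in> F1 \<union> F2" "e' \<in> F1 \<union> F2" "e \<noteq> e'"
    then consider "e \<in> F1" "e' \<in> F1" | "e \<in> F2" "e' \<in> F2" | "e \<in> F1" "e' \<in> F2" | "e \<in> F2" "e' \<in> F1" by blast
    then show "e \<inter> e' = {}"
    proof cases
      case 1 then show ?thesis using matching_disj[OF assms(1)] ee(3) by blast
    next
      case 2 then show ?thesis using matching_disj[OF assms(2)] ee(3) by blast
    next
      case 3 then show ?thesis using assms(3-5) by blast
    next
      case 4 then show ?thesis using assms(3-5) by blast
    qed
  qed
  moreover have "card (F1 \<union> F2) = card F1 + card F2"
    using d matching_finite assms(1,2) by (simp add: card_Un_disjoint)
  ultimately show ?thesis using assms(3,4) by blast
qed

definition A0 :: "nat \<Rightarrow> (dih \<times> nat) set" where "A0 n = ({..<n} \<times> {..<2}) \<times> {0}"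
definition B1 :: "nat \<Rightarrow> (dih \<times> nat) set" where "B1 n = ({..<n} \<times> {0}) \<times> {1}"
definition C1 :: "nat \<Rightarrow> (dih \<times> nat) set" where "C1 n = ({..<n} \<times> {1}) \<times> {1}"

lemma clique_A0: "clique n (A0 n)"
  unfolding clique_def
proof (intro conjI ballI)
  show "A0 n \<subseteq> M_carrier n" by (auto simp: A0_def M_carrier_def dih_carrier_def)
  fix p q r assume "p \<in> A0 n" "q \<in> A0 n" "r \<in> A0 n"
  then obtain a b c s t u where "p = ((a,s),0)" "q = ((b,t),0)" "r = ((c,u),0)" "a < n" "b < n" "c < n" "s < 2" "t < 2" "u < 2"
    by (auto simp: A0_def)
  then show "M_op n (M_op n p q) r = M_op n p (M_op n q r)" using grp0 by simp
qed

lemma clique_B1: "clique n (B1 n)"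
  unfolding clique_def
proof (intro conjI ballI)
  show "B1 n \<subseteq> M_carrier n" by (auto simp: B1_def M_carrier_def dih_carrier_def)
  fix p q r assume "p \<in> B1 n" "q \<in> B1 n" "r \<in> B1 n"
  then obtain a b c  where "p = ((a,0),1)" "q = ((b,0),1)" "r = ((c,0),1)" "a < n" "b < n" "c < n" 
    by (auto simp: B1_def)
  then show "M_op n (M_op n p q) r = M_op n p (M_op n q r)" using rot1 by simp
qed

lemma clique_C1: "clique n (C1 n)"
  unfolding clique_def
proof (intro conjI ballI)
  show "C1 n \<subseteq> M_carrier n" by (auto simp: C1_def M_carrier_def dih_carrier_def)
  fix p q r assume "p \<in> C1 n" "q \<in> C1 n" "r \<in> C1 n"
  then obtain a b c  where "p = ((a,1),1)" "q = ((b,1),1)" "r = ((c,1),1)" "a < n" "b < n" "c < n" 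
    by (auto simp: C1_def)
  then show "M_op n (M_op n p q) r = M_op n p (M_op n q r)" using ref1 by simp
qed

lemma finite_A0: "finite (A0 n)" by (simp add: A0_def)
lemma finite_B1: "finite (B1 n)" by (simp add: B1_def)
lemma finite_C1: "finite (C1 n)" by (simp add: C1_def)
lemma card_A0: "card (A0 n) = 2 * n" by (simp add: A0_def card_cartesian_product)
lemma card_B1: "card (B1 n) = n" by (simp add: B1_def card_cartesian_product)
lemma card_C1: "card (C1 n) = n" by (simp add: C1_def card_cartesian_product)

lemma id_edge: assumes "n \<ge> 3"
  shows "{((0,0),0), ((0,0),1), ((0,1),1)} \<in> assoc_hyperedges n"
  unfolding assoc_hyperedges_def
  apply (rule CollectI)
  apply (rule exI[of _ "((0,0),0)"], rule exI[of _ "((0,0),1)"], rule exI[of _ "((0,1),1)"])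
  using assms by (simp add: M_carrier_def dih_carrier_def M_op_def dih_mult_def dih_inv_def dih_one_def)

lemma arith1: "(n::nat) mod 3 = 0 \<Longrightarrow> 2*n div 3 + n div 3 + n div 3 = n + n div 3"
  by auto
lemma arith2: "(n::nat) mod 3 \<noteq> 0 \<Longrightarrow> 1 + (2*n-1) div 3 + (n-1) div 3 + (n-1) div 3 = n + n div 3"
proof -
  assume h: "n mod 3 \<noteq> 0"
  obtain q r where n: "n = 3*q + r" "r < 3" using div_mod_decomp[of n 3] mod_less_divisor[of 3 n] by (metis add.commute mult.commute zero_less_numeral)
  then have "r = 1 \<or> r = 2" using h by auto
  then show ?thesis
  proof
    assume r: "r = 1"
    have a: "2*n-1 = 3*(2*q) + 1" "n - 1 = 3*q" "n = 3*q+1" using n r by auto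
    have b: "(3*(2*q) + 1) div 3 = 2*q" "(3*q+1) div 3 = q" by presburger+
    show ?thesis unfolding a b by simp
  next
    assume r: "r = 2"
    have a: "2*n-1 = 3*(2*q+1)" "n - 1 = 3*q+1" "n = 3*q+2" using n r by auto
    have b: "(3*q+1) div 3 = q" "(3*q+2) div 3 = q" by presburger+
    show ?thesis unfolding a b by simp
  qed
qed

lemma lower: assumes "n \<ge> 3" shows "\<exists>F. is_matching n F \<and> card F = n + n div 3"
proof (cases "n mod 3 = 0")
  case True
  obtain FA where FA: "is_matching n FA" "card FA = card (A0 n) div 3" "\<forall>e\<in>FA. e \<subseteq> A0 n"
    using clique_matching[OF _ clique_A0[of n]] finite_A0[of n] by blast
  obtain FB where FB: "is_matching n FB" "card FB = card (B1 n) div 3" "\<forall>e\<in>FB. e \<subseteq> B1 n"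
    using clique_matching[OF _ clique_B1[of n]] finite_B1[of n] by blast
  obtain FC where FC: "is_matching n FC" "card FC = card (C1 n) div 3" "\<forall>e\<in>FC. e \<subseteq> C1 n"
    using clique_matching[OF _ clique_C1[of n]] finite_C1[of n] by blast
  have d1: "A0 n \<inter> B1 n = {}" "(A0 n \<union> B1 n) \<inter> C1 n = {}" by (auto simp: A0_def B1_def C1_def)
  from matching_union[OF FA(1) FB(1) FA(3) FB(3) d1(1)] have U: "is_matching n (FA \<union> FB)"
    "card (FA \<union> FB) = card FA + card FB" "\<forall>e\<in>FA \<union> FB. e \<subseteq> A0 n \<union> B1 n" by auto
  from matching_union[OF U(1) FC(1) U(3) FC(3) d1(2)] have
    "is_matching n (FA \<union> FB \<union> FC)" "card (FA \<union> FB \<union> FC) = card FA + card FB + card FC" using U(2) by auto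
  moreover have "card FA + card FB + card FC = n + n div 3"
    using FA(2) FB(2) FC(2) arith1[OF True] by (simp add: card_A0 card_B1 card_C1)
  ultimately show ?thesis by metis
next
  case False
  define T where "T = {((0::nat,0::nat),0::nat), ((0,0),1), ((0,1),1)}"
  have Te: "T \<in> assoc_hyperedges n" using id_edge[OF assms] by (simp add: T_def)
  have FT: "is_matching n {T}" "card {T} = 1" "\<forall>e\<in>{T}. e \<subseteq> T"
    using Te by (auto simp: is_matching_def)
  define A' where "A' = A0 n - T"
  define B' where "B' = B1 n - T"
  define C' where "C' = C1 n - T"
  have cA: "card A' = 2 * n - 1"
  proof -
    have "A0 n \<inter> T = {((0,0),0)}" using assms by (auto simp: A0_def T_def)
    then have "A' = A0 n - {((0,0),0)}" unfolding A'_def by blast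
    moreover have "((0,0),0) \<in> A0 n" using assms by (simp add: A0_def)
    ultimately show ?thesis by (simp add: card_A0 A0_def card_cartesian_product)
  qed
  have cB: "card B' = n - 1"
  proof -
    have "B1 n \<inter> T = {((0,0),1)}" using assms by (auto simp: B1_def T_def)
    then have "B' = B1 n - {((0,0),1)}" unfolding B'_def by blast
    moreover have "((0,0),1) \<in> B1 n" using assms by (simp add: B1_def)
    ultimately show ?thesis by (simp add: card_B1 B1_def card_cartesian_product)
  qed
  have cC: "card C' = n - 1"
  proof -
    have "C1 n \<inter> T = {((0,1),1)}" using assms by (auto simp: C1_def T_def)
    then have "C' = C1 n - {((0,1),1)}" unfolding C'_def by blast
    moreover have "((0,1),1) \<in> C1 n" using assms by (simp add: C1_def)
    ultimately show ?thesis by (simp add: card_C1 C1_def card_cartesian_product)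
  qed
  have finA: "finite A'" "A' \<subseteq> A0 n" using finite_A0[of n] unfolding A'_def by auto
  have finB: "finite B'" "B' \<subseteq> B1 n" using finite_B1[of n] unfolding B'_def by auto
  have finC: "finite C'" "C' \<subseteq> C1 n" using finite_C1[of n] unfolding C'_def by auto
  obtain FA where FA: "is_matching n FA" "card FA = card A' div 3" "\<forall>e\<in>FA. e \<subseteq> A'"
    using clique_matching[OF _ clique_subset[OF clique_A0[of n], of "A'"]] finA by blast
  obtain FB where FB: "is_matching n FB" "card FB = card B' div 3" "\<forall>e\<in>FB. e \<subseteq> B'"
    using clique_matching[OF _ clique_subset[OF clique_B1[of n], of "B'"]] finB by blast
  obtain FC where FC: "is_matching n FC" "card FC = card C' div 3" "\<forall>e\<in>FC. e \<subseteq> C'"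
    using clique_matching[OF _ clique_subset[OF clique_C1[of n], of "C'"]] finC by blast
  have d1: "T \<inter> A' = {}" "(T \<union> A') \<inter> B' = {}" "(T \<union> A' \<union> B') \<inter> C' = {}"
    by (auto simp: A'_def B'_def C'_def A0_def B1_def C1_def)
  from matching_union[OF FT(1) FA(1) FT(3) FA(3) d1(1)] have U: "is_matching n ({T} \<union> FA)"
    "card ({T} \<union> FA) = 1 + card FA" "\<forall>e\<in>{T} \<union> FA. e \<subseteq> T \<union> A'" by auto
  from matching_union[OF U(1) FB(1) U(3) FB(3) d1(2)] have U2: "is_matching n ({T} \<union> FA \<union> FB)"
    "card ({T} \<union> FA \<union> FB) = 1 + card FA + card FB" "\<forall>e\<in>{T} \<union> FA \<union> FB. e \<subseteq> T \<union> A' \<union> B'"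
    using U(2) by auto
  from matching_union[OF U2(1) FC(1) U2(3) FC(3) d1(3)] have
    "is_matching n ({T} \<union> FA \<union> FB \<union> FC)" "card ({T} \<union> FA \<union> FB \<union> FC) = 1 + card FA + card FB + card FC"
    using U2(2) by auto
  moreover have "1 + card FA + card FB + card FC = n + n div 3"
    using FA(2) FB(2) FC(2) cA cB cC arith2[OF False] by simp
  ultimately show ?thesis by metis
qed

theorem mainTheorem10:
  fixes n :: nat
  assumes "n \<ge> 3"
  shows "matching_number n = n + n div 3"
proof -
  have fin: "finite {F. is_matching n F}"
  proof (rule finite_subset)
    show "{F. is_matching n F} \<subseteq> Pow (Pow (M_carrier n))"
      using matching_Pow by blast
    show "finite (Pow (Pow (M_carrier n)))" using finite_M by simp
  qed
  show ?thesis unfolding matching_number_def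
  proof (rule Max_eqI)
    show "finite (card ` {F. is_matching n F})" using fin by simp
    fix y assume "y \<in> card ` {F. is_matching n F}"
    then obtain F where "is_matching n F" "y = card F" by blast
    then have "3 * y \<le> 4 * n" using matching_upper by blast
    then show "y \<le> n + n div 3" by presburger
  next
    obtain F where F: "is_matching n F" "card F = n + n div 3" using lower[OF assms] by blast
    show "n + n div 3 \<in> card ` {F. is_matching n F}"
      by (rule image_eqI[of _ _ F]) (use F in auto)
  qed
qed

end
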